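(* If there exist integer weights $w_1,\ldots,w_n$ such that $|w(2^{[n]})|=a$ and $\beta(w)=b$, then there exists a uniquely decodable code pair $(A,B)$ with $A,B\subseteq\{0,1\}^n$, $|A|=a$ and $|B|=b$.
   Context: For $X\subseteq[n]$, $w(X)=\sum_{i\in X}w_i$ and $w(2^{[n]})=\{w(X):X\subseteq[n]\}$; $\beta(w)=\max_{x\in\mathbb{Z}}|\{S\subseteq[n]:w(S)=x\}|$. A pair $(A,B)$ with $A,B\subseteq\{0,1\}^n$ is a uniquely decodable code pair if $|A+B|=|\{a+b:a\in A,b\in B\}|=|A|\cdot|B|$, where addition is over $\mathbb{Z}^n$ (not modulo 2). *)

theory Defs
  imports Main
begin

text \<open>Indices [n] are represented as {0..<n}. Weights w :: nat => int, only w i for i < n matter.\<close>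

definition subset_sum :: "(nat \<Rightarrow> int) \<Rightarrow> nat set \<Rightarrow> int" where
  "subset_sum w X = (\<Sum>i\<in>X. w i)"

definition subset_sums :: "nat \<Rightarrow> (nat \<Rightarrow> int) \<Rightarrow> int set" where
  "subset_sums n w = subset_sum w ` Pow {0..<n}"

definition beta :: "nat \<Rightarrow> (nat \<Rightarrow> int) \<Rightarrow> nat" where
  "beta n w = Max ((\<lambda>x. card {S. S \<subseteq> {0..<n} \<and> subset_sum w S = x}) ` UNIV)"

text \<open>Binary vectors of length n: functions nat => int with values in {0,1} on {0..<n}
  and 0 outside (so that vectors are determined by their first n coordinates).\<close>

definition binvecs :: "nat \<Rightarrow> (nat \<Rightarrow> int) set" where
  "binvecs n = {v. (\<forall>i<n. v i \<in> {0,1}) \<and> (\<forall>i\<ge>n. v i = 0)}"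

definition sumset :: "(nat \<Rightarrow> int) set \<Rightarrow> (nat \<Rightarrow> int) set \<Rightarrow> (nat \<Rightarrow> int) set" where
  "sumset A B = {(\<lambda>i. a i + b i) | a b. a \<in> A \<and> b \<in> B}"

definition ud_code_pair :: "nat \<Rightarrow> (nat \<Rightarrow> int) set \<Rightarrow> (nat \<Rightarrow> int) set \<Rightarrow> bool" where
  "ud_code_pair n A B \<longleftrightarrow> A \<subseteq> binvecs n \<and> B \<subseteq> binvecs n \<and>
     card (sumset A B) = card A * card B"

end

theory Submission
  imports Defs
begin

definition ind :: "nat set \<Rightarrow> nat \<Rightarrow> int" where
  "ind S = (\<lambda>i. if i \<in> S then 1 else 0)"

definition dotw :: "nat \<Rightarrow> (nat \<Rightarrow> int) \<Rightarrow> (nat \<Rightarrow> int) \<Rightarrow> int" where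
  "dotw n w v = (\<Sum>i<n. w i * v i)"

lemma ind_bin: "S \<subseteq> {0..<n} \<Longrightarrow> ind S \<in> binvecs n"
  by (auto simp: ind_def binvecs_def)

lemma ind_inj: "inj ind"
proof (rule injI)
  fix S T assume "ind S = ind T"
  then have "\<forall>i. (i \<in> S) = (i \<in> T)" unfolding ind_def by (metis one_neq_zero)
  then show "S = T" by blast
qed

lemma dot_ind: "S \<subseteq> {0..<n} \<Longrightarrow> dotw n w (ind S) = subset_sum w S"
proof -
  assume S: "S \<subseteq> {0..<n}"
  have "dotw n w (ind S) = (\<Sum>i\<in>{..<n}. if i \<in> S then w i else 0)"
    unfolding dotw_def ind_def by (rule sum.cong) auto
  also have "\<dots> = (\<Sum>i\<in>{..<n} \<inter> S. w i)"
    by (simp add: sum.inter_restrict)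
  also have "{..<n} \<inter> S = S" using S by auto
  finally show ?thesis by (simp add: subset_sum_def)
qed

lemma dot_add: "dotw n w (\<lambda>i. a i + b i) = dotw n w a + dotw n w b"
  unfolding dotw_def by (simp add: distrib_left sum.distrib)

theorem proposition4:
  fixes n a b :: nat
  assumes "\<exists>w :: nat \<Rightarrow> int. card (subset_sums n w) = a \<and> beta n w = b"
  shows "\<exists>A B. ud_code_pair n A B \<and> card A = a \<and> card B = b"
proof -
  obtain w where wa: "card (subset_sums n w) = a" and wb: "beta n w = b" using assms by blast
  define F where "F = (\<lambda>x. card {S. S \<subseteq> {0..<n} \<and> subset_sum w S = x})"
  have fin: "finite (F ` UNIV)"
  proof (rule finite_subset)
    show "F ` UNIV \<subseteq> {..card (Pow {0..<n::nat})}"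
      unfolding F_def by (auto intro!: card_mono)
  qed auto
  have "Max (F ` UNIV) \<in> F ` UNIV" using fin by (intro Max_in) auto
  then obtain x0 where x0: "F x0 = b" using wb unfolding beta_def F_def[symmetric] by auto
  define rep where "rep = (\<lambda>s. SOME T. T \<subseteq> {0..<n} \<and> subset_sum w T = s)"
  have rep: "rep s \<subseteq> {0..<n} \<and> subset_sum w (rep s) = s" if "s \<in> subset_sums n w" for s
  proof -
    from that obtain T where "T \<subseteq> {0..<n} \<and> subset_sum w T = s"
      unfolding subset_sums_def by auto
    then show ?thesis unfolding rep_def by (rule someI)
  qed
  define A where "A = (\<lambda>s. ind (rep s)) ` subset_sums n w"
  define SB where "SB = {S. S \<subseteq> {0..<n} \<and> subset_sum w S = x0}"
  define B where "B = ind ` SB"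
  have dA: "dotw n w (ind (rep s)) = s" if "s \<in> subset_sums n w" for s
    using rep[OF that] dot_ind by metis
  have injA: "inj_on (\<lambda>s. ind (rep s)) (subset_sums n w)"
    by (rule inj_onI) (metis dA)
  have cA: "card A = a" unfolding A_def using card_image[OF injA] wa by simp
  have cB: "card B = b" unfolding B_def using card_image[OF inj_on_subset[OF ind_inj]] x0
    unfolding F_def SB_def by auto
  have AS: "A \<subseteq> binvecs n" unfolding A_def using rep ind_bin by blast
  have BS: "B \<subseteq> binvecs n" unfolding B_def SB_def using ind_bin by blast
  have dB: "v \<in> B \<Longrightarrow> dotw n w v = x0" for v
    unfolding B_def SB_def using dot_ind by auto
  have dA': "v \<in> A \<Longrightarrow> \<exists>s. v = ind (rep s) \<and> s \<in> subset_sums n w \<and> dotw n w v = s" for v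
    unfolding A_def using dA by auto
  have sum_eq: "sumset A B = (\<lambda>(u,v). (\<lambda>i. u i + v i)) ` (A \<times> B)"
    unfolding sumset_def by auto
  have inj: "inj_on (\<lambda>(u,v). (\<lambda>i. u i + v i)) (A \<times> B)"
  proof (rule inj_onI, clarify)
    fix u v u' v' assume u: "u \<in> A" and v: "v \<in> B" and u': "u' \<in> A" and v': "v' \<in> B"
      and eq: "(\<lambda>i. u i + v i) = (\<lambda>i. u' i + v' i)"
    have "dotw n w u + x0 = dotw n w u' + x0"
      using dot_add[of n w u v] dot_add[of n w u' v'] eq dB[OF v] dB[OF v'] by simp
    then have "dotw n w u = dotw n w u'" by simp
    then have "u = u'" using dA'[OF u] dA'[OF u'] by auto
    moreover have "v = v'"
    proof
      fix i show "v i = v' i" using fun_cong[OF eq, of i] \<open>u = u'\<close> by simp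
    qed
    ultimately show "u = u' \<and> v = v'" by simp
  qed
  have "card (sumset A B) = card A * card B"
    unfolding sum_eq card_image[OF inj] card_cartesian_product ..
  then show ?thesis using AS BS cA cB unfolding ud_code_pair_def by blast
qed

end
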